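(* Let $G$ be a simple graph on $n$ vertices with $cM_2(G)\ge cM_2(H)$ for every simple graph $H$ on $n$ vertices, and let $F$, $X$, $Y$, $N^-_F$ be as defined in the context. Let $v\in Y$ with $N^-_F(v)\subseteq X$. Then for every $u\in X$ with $uv\in E(G)$, the arc $\overrightarrow{uv}$ belongs to $F$.
   Context: All graphs are finite and simple; $d_G(u)$ is the degree of $u$ and $cM_2(G)=\sum_{uv\in E(G)}|d_G(u)^2-d_G(v)^2|$. The canonical mixed graph $F$ of $G$ has vertex set $V(G)$; for each edge $uv\in E(G)$: if $d_G(u)>d_G(v)$ then $F$ contains the arc $\overrightarrow{uv}$, and if $d_G(u)=d_G(v)$ then $F$ contains the undirected edge $uv$. $d^+_F(u)$ (resp. $d^-_F(u)$) is the number of arcs of $F$ with tail (resp. head) $u$; $N^+_F(u)=\{w:\overrightarrow{uw}\in A(F)\}$ and $N^-_F(u)=\{w:\overrightarrow{wu}\in A(F)\}$. $X=\{u\in V(G): d^+_F(u)\ge d^-_F(u)\}$ and $Y=\{u\in V(G): d^+_F(u)< d^-_F(u)\}$. *)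

theory Defs
  imports Main
begin

text \<open>A finite simple graph: finite vertex set V, edge relation E given as a set of
ordered pairs that is symmetric and irreflexive; the undirected edge uv corresponds
to the two pairs (u,v) and (v,u).\<close>
definition simple_graph :: "'a set \<Rightarrow> ('a \<times> 'a) set \<Rightarrow> bool" where
  "simple_graph V E \<longleftrightarrow> finite V \<and> E \<subseteq> V \<times> V \<and> (\<forall>u v. (u,v) \<in> E \<longrightarrow> (v,u) \<in> E)
     \<and> (\<forall>u. (u,u) \<notin> E)"

definition deg :: "('a \<times> 'a) set \<Rightarrow> 'a \<Rightarrow> nat" where
  "deg E u = card {w. (u,w) \<in> E}"

text \<open>cM_2(G) = sum over (undirected) edges uv of |d(u)^2 - d(v)^2|. Summing over
ordered pairs counts each edge twice, hence the division by 2 (exact).\<close>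
definition cM2 :: "('a \<times> 'a) set \<Rightarrow> int" where
  "cM2 E = (\<Sum>(u,v)\<in>E. \<bar>int (deg E u)^2 - int (deg E v)^2\<bar>) div 2"

definition arcs :: "('a \<times> 'a) set \<Rightarrow> ('a \<times> 'a) set" where
  "arcs E = {(u,v). (u,v) \<in> E \<and> deg E u > deg E v}"

definition outdegF :: "('a \<times> 'a) set \<Rightarrow> 'a \<Rightarrow> nat" where
  "outdegF E u = card {w. (u,w) \<in> arcs E}"

definition indegF :: "('a \<times> 'a) set \<Rightarrow> 'a \<Rightarrow> nat" where
  "indegF E u = card {w. (w,u) \<in> arcs E}"

definition in_nbrF :: "('a \<times> 'a) set \<Rightarrow> 'a \<Rightarrow> 'a set" where
  "in_nbrF E u = {w. (w,u) \<in> arcs E}"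

definition Xset :: "'a set \<Rightarrow> ('a \<times> 'a) set \<Rightarrow> 'a set" where
  "Xset V E = {u\<in>V. outdegF E u \<ge> indegF E u}"

definition Yset :: "'a set \<Rightarrow> ('a \<times> 'a) set \<Rightarrow> 'a set" where
  "Yset V E = {u\<in>V. outdegF E u < indegF E u}"

end

theory Submission
  imports Defs
begin

lemma T_split:
  fixes f :: "'a \<times> 'a \<Rightarrow> int"
  assumes fin: "finite E" and sym: "\<And>x y. (x,y) \<in> E \<Longrightarrow> (y,x) \<in> E"
    and irr: "\<And>x. (x,x) \<notin> E" and pq: "p \<noteq> q"
    and fs: "\<And>x y. f (x,y) = f (y,x)"
  shows "sum f E = sum f (E \<inter> {e. fst e \<notin> {p,q} \<and> snd e \<notin> {p,q}})
     + 2 * (sum (\<lambda>y. f (p,y)) {y. (p,y) \<in> E \<and> y \<notin> {p,q}} + sum (\<lambda>y. f (q,y)) {y. (q,y) \<in> E \<and> y \<notin> {p,q}})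
     + (if (p,q) \<in> E then 2 * f (p,q) else 0)"
proof -
  define D where "D = {p,q}"
  define E0 where "E0 = E \<inter> {e. fst e \<notin> D \<and> snd e \<notin> D}"
  define E1 where "E1 = E \<inter> {e. fst e \<in> D \<and> snd e \<notin> D}"
  define E2 where "E2 = E \<inter> {e. fst e \<notin> D \<and> snd e \<in> D}"
  define E3 where "E3 = E \<inter> {e. fst e \<in> D \<and> snd e \<in> D}"
  have split: "E = E0 \<union> E1 \<union> E2 \<union> E3" unfolding E0_def E1_def E2_def E3_def by auto
  have fins: "finite E0" "finite E1" "finite E2" "finite E3"
    using fin unfolding E0_def E1_def E2_def E3_def by auto
  have d: "E0 \<inter> E1 = {}" "E0 \<inter> E2 = {}" "E0 \<inter> E3 = {}" "E1 \<inter> E2 = {}" "E1 \<inter> E3 = {}" "E2 \<inter> E3 = {}"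
    unfolding E0_def E1_def E2_def E3_def by auto
  have "sum f (E0 \<union> E1 \<union> E2 \<union> E3) = sum f (E0 \<union> E1 \<union> E2) + sum f E3"
    by (rule sum.union_disjoint) (use fins d in auto)
  also have "sum f (E0 \<union> E1 \<union> E2) = sum f (E0 \<union> E1) + sum f E2"
    by (rule sum.union_disjoint) (use fins d in auto)
  also have "sum f (E0 \<union> E1) = sum f E0 + sum f E1"
    by (rule sum.union_disjoint) (use fins d in auto)
  finally have s1: "sum f E = sum f E0 + sum f E1 + sum f E2 + sum f E3" using split by simp
  have E2eq: "E2 = prod.swap ` E1"
  proof
    show "E2 \<subseteq> prod.swap ` E1"
    proof
      fix e assume "e \<in> E2"
      then obtain x y where e: "e = (x,y)" "(x,y) \<in> E" "x \<notin> D" "y \<in> D" unfolding E2_def by (cases e) auto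
      then have "(y,x) \<in> E1" unfolding E1_def using sym by auto
      then show "e \<in> prod.swap ` E1" using e(1) by (intro rev_image_eqI[of "(y,x)"]) auto
    qed
    show "prod.swap ` E1 \<subseteq> E2" unfolding E1_def E2_def using sym by auto
  qed
  have "sum f E2 = sum (f \<circ> prod.swap) E1"
    unfolding E2eq by (rule sum.reindex) simp
  also have "\<dots> = sum f E1" by (rule sum.cong) (auto simp: fs)
  finally have s2: "sum f E2 = sum f E1" .
  define Ap where "Ap = {y. (p,y) \<in> E \<and> y \<notin> {p,q}}"
  define Aq where "Aq = {y. (q,y) \<in> E \<and> y \<notin> {p,q}}"
  have finA: "finite Ap" "finite Aq"
  proof -
    have "Ap \<subseteq> snd ` E" "Aq \<subseteq> snd ` E" unfolding Ap_def Aq_def by force+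
    then show "finite Ap" "finite Aq" using fin finite_subset by blast+
  qed
  have E1eq: "E1 = Pair p ` Ap \<union> Pair q ` Aq" unfolding E1_def Ap_def Aq_def D_def by auto
  have "sum f E1 = sum f (Pair p ` Ap) + sum f (Pair q ` Aq)"
    unfolding E1eq by (rule sum.union_disjoint) (use finA pq in auto)
  also have "\<dots> = sum (\<lambda>y. f (p,y)) Ap + sum (\<lambda>y. f (q,y)) Aq"
    by (simp add: sum.reindex inj_on_def)
  finally have s3: "sum f E1 = sum (\<lambda>y. f (p,y)) Ap + sum (\<lambda>y. f (q,y)) Aq" .
  have s4: "sum f E3 = (if (p,q) \<in> E then 2 * f (p,q) else 0)"
  proof (cases "(p,q) \<in> E")
    case True
    then have "E3 = {(p,q),(q,p)}" unfolding E3_def D_def using sym irr by auto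
    then show ?thesis using True pq fs by simp
  next
    case False
    then have "E3 = {}" unfolding E3_def D_def using sym irr by auto
    then show ?thesis using False by simp
  qed
  show ?thesis using s1 s2 s3 s4 unfolding E0_def D_def Ap_def Aq_def by simp
qed

lemma sum_pm_bound:
  fixes g :: "'b \<Rightarrow> int"
  assumes "finite A" "\<And>y. y\<in>A \<Longrightarrow> g y \<ge> (if P y then c else -c)"
  shows "sum g A \<ge> c * int (card {y\<in>A. P y}) - c * int (card {y\<in>A. \<not> P y})"
proof -
  have "sum g A \<ge> sum (\<lambda>y. if P y then c else -c) A" using assms by (intro sum_mono) auto
  moreover have "sum (\<lambda>y. if P y then c else -c) A = sum (\<lambda>_. c) (A\<inter>{y. P y}) + sum (\<lambda>_. -c) (A \<inter> -{y. P y})"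
    by (rule sum.If_cases) (rule assms(1))
  moreover have "A\<inter>{y. P y} = {y\<in>A. P y}" "A \<inter> -{y. P y} = {y\<in>A. \<not> P y}" by auto
  ultimately show ?thesis by (simp add: algebra_simps)
qed

lemma card_part:
  assumes "finite A"
  shows "card A = card {y\<in>A. P y} + card {y\<in>A. \<not> P y}"
proof -
  have "A = {y\<in>A. P y} \<union> {y\<in>A. \<not> P y}" by auto
  then have "card A = card ({y\<in>A. P y} \<union> {y\<in>A. \<not> P y})" by simp
  also have "\<dots> = card {y\<in>A. P y} + card {y\<in>A. \<not> P y}"
    by (rule card_Un_disjoint) (use assms in auto)
  finally show ?thesis .
qed

lemma del_term:
  fixes a k :: int
  assumes "a \<ge> 1" "k \<ge> 0"
  shows "\<bar>(a-1)^2 - k^2\<bar> - \<bar>a^2 - k^2\<bar> \<ge> (if k \<ge> a then 2*a-1 else -(2*a-1))"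
proof (cases "k \<ge> a")
  case True
  then have "a^2 \<le> k^2" "(a-1)^2 \<le> k^2" using assms power_mono[of a k 2] power_mono[of "a-1" k 2] by auto
  then show ?thesis using True by (simp add: power2_eq_square algebra_simps)
next
  case False
  then have "k^2 \<le> (a-1)^2" "k^2 \<le> a^2" using assms power_mono[of k "a-1" 2] power_mono[of k a 2] by auto
  then show ?thesis using False by (simp add: power2_eq_square algebra_simps)
qed

lemma add_term:
  fixes a k :: int
  assumes "a \<ge> 0" "k \<ge> 0"
  shows "\<bar>(a+1)^2 - k^2\<bar> - \<bar>a^2 - k^2\<bar> \<ge> (if k \<le> a then 2*a+1 else -(2*a+1))"
proof (cases "k \<le> a")
  case True
  then have "k^2 \<le> a^2" "k^2 \<le> (a+1)^2" using assms power_mono[of k a 2] power_mono[of k "a+1" 2] by auto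
  then show ?thesis using True by (simp add: power2_eq_square algebra_simps)
next
  case False
  then have "(a+1)^2 \<le> k^2" "a^2 \<le> k^2" using assms power_mono[of "a+1" k 2] power_mono[of a k 2] by auto
  then show ?thesis using False by (simp add: power2_eq_square algebra_simps)
qed


definition Fterm :: "('a \<times> 'a) set \<Rightarrow> 'a \<times> 'a \<Rightarrow> int" where
  "Fterm E = (\<lambda>(x,y). \<bar>int (deg E x)^2 - int (deg E y)^2\<bar>)"

lemma cM2_T: "cM2 E = sum (Fterm E) E div 2"
  unfolding cM2_def Fterm_def by simp

lemma Fsym: "Fterm E (x,y) = Fterm E (y,x)"
  unfolding Fterm_def by (simp add: abs_minus_commute)

lemma fin_nb: "finite E \<Longrightarrow> finite {w. (x,w) \<in> E}"
  by (rule finite_subset[of _ "snd ` E"]) force+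

lemma deg_del:
  assumes fin: "finite E" and sym: "\<And>x y. (x,y) \<in> E \<Longrightarrow> (y,x) \<in> E"
    and pq: "(p,q) \<in> E" "p \<noteq> q" and H: "H = E - {(p,q),(q,p)}"
  shows "deg H p = deg E p - 1" "deg H q = deg E q - 1" "x \<notin> {p,q} \<Longrightarrow> deg H x = deg E x"
proof -
  have "{w. (p,w) \<in> H} = {w. (p,w) \<in> E} - {q}" using H pq by auto
  then show "deg H p = deg E p - 1" unfolding deg_def using pq fin_nb[OF fin] by simp
  have "{w. (q,w) \<in> H} = {w. (q,w) \<in> E} - {p}" using H pq by auto
  then show "deg H q = deg E q - 1" unfolding deg_def using sym[OF pq(1)] fin_nb[OF fin] by simp
  assume "x \<notin> {p,q}"
  then have "{w. (x,w) \<in> H} = {w. (x,w) \<in> E}" using H by auto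
  then show "deg H x = deg E x" unfolding deg_def by simp
qed

lemma deg_add:
  assumes fin: "finite E" and sym: "\<And>x y. (x,y) \<in> E \<Longrightarrow> (y,x) \<in> E"
    and pq: "(p,q) \<notin> E" "p \<noteq> q" and H: "H = E \<union> {(p,q),(q,p)}"
  shows "deg H p = deg E p + 1" "deg H q = deg E q + 1" "x \<notin> {p,q} \<Longrightarrow> deg H x = deg E x"
proof -
  have "{w. (p,w) \<in> H} = insert q {w. (p,w) \<in> E}" using H pq by auto
  then show "deg H p = deg E p + 1" unfolding deg_def using pq fin_nb[OF fin] by simp
  have qp: "(q,p) \<notin> E" using sym pq by blast
  have "{w. (q,w) \<in> H} = insert p {w. (q,w) \<in> E}" using H pq by auto
  then show "deg H q = deg E q + 1" unfolding deg_def using qp fin_nb[OF fin] by simp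
  assume "x \<notin> {p,q}"
  then have "{w. (x,w) \<in> H} = {w. (x,w) \<in> E}" using H by auto
  then show "deg H x = deg E x" unfolding deg_def by simp
qed


lemma deg_pos: "finite E \<Longrightarrow> (p,q) \<in> E \<Longrightarrow> deg E p \<ge> 1"
  unfolding deg_def using fin_nb[of E p] card_gt_0_iff[of "{w. (p,w) \<in> E}"] by force

lemma del_bound:
  assumes fin: "finite E" and symA: "\<forall>x y. (x,y) \<in> E \<longrightarrow> (y,x) \<in> E"
    and irr: "\<And>x. (x,x) \<notin> E" and pq: "(p,q) \<in> E" and H: "H = E - {(p,q),(q,p)}"
  defines "a \<equiv> int (deg E p)" and "b \<equiv> int (deg E q)"
    and "Ap \<equiv> {y. (p,y) \<in> E \<and> y \<notin> {p,q}}" and "Aq \<equiv> {y. (q,y) \<in> E \<and> y \<notin> {p,q}}"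
  shows "sum (Fterm H) H - sum (Fterm E) E \<ge>
     2*((2*a-1)*(int (card {y\<in>Ap. a \<le> int (deg E y)}) - int (card {y\<in>Ap. \<not> a \<le> int (deg E y)}))
      + (2*b-1)*(int (card {y\<in>Aq. b \<le> int (deg E y)}) - int (card {y\<in>Aq. \<not> b \<le> int (deg E y)})))
     - 2*\<bar>a^2 - b^2\<bar>"
proof -
  have sym: "\<And>x y. (x,y) \<in> E \<Longrightarrow> (y,x) \<in> E" using symA by blast
  have pq': "p \<noteq> q" using irr pq by auto
  have finH: "finite H" using fin H by auto
  have symH: "\<And>x y. (x,y) \<in> H \<Longrightarrow> (y,x) \<in> H" using sym H by auto
  have irrH: "\<And>x. (x,x) \<notin> H" using irr H by auto
  note dd = deg_del[OF fin sym pq pq' H]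
  have a1: "a \<ge> 1" unfolding a_def using deg_pos[OF fin pq] by simp
  have b1: "b \<ge> 1" unfolding b_def using deg_pos[OF fin sym[OF pq]] by simp
  have dHp: "int (deg H p) = a - 1" using dd(1) deg_pos[OF fin pq] unfolding a_def by simp
  have dHq: "int (deg H q) = b - 1" using dd(2) deg_pos[OF fin sym[OF pq]] unfolding b_def by simp
  define D0 where "D0 = {e. fst e \<notin> {p,q} \<and> snd e \<notin> {p,q}}"
  have TH: "sum (Fterm H) H = sum (Fterm H) (H \<inter> D0)
     + 2 * (sum (\<lambda>y. Fterm H (p,y)) {y. (p,y) \<in> H \<and> y \<notin> {p,q}} + sum (\<lambda>y. Fterm H (q,y)) {y. (q,y) \<in> H \<and> y \<notin> {p,q}})
     + (if (p,q) \<in> H then 2 * Fterm H (p,q) else 0)"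
    unfolding D0_def by (rule T_split[where f="Fterm H", OF finH symH irrH pq' Fsym[of H]])
  have TE: "sum (Fterm E) E = sum (Fterm E) (E \<inter> D0)
     + 2 * (sum (\<lambda>y. Fterm E (p,y)) Ap + sum (\<lambda>y. Fterm E (q,y)) Aq)
     + (if (p,q) \<in> E then 2 * Fterm E (p,q) else 0)"
    unfolding D0_def Ap_def Aq_def by (rule T_split[where f="Fterm E", OF fin sym irr pq' Fsym[of E]])
  have HD0: "H \<inter> D0 = E \<inter> D0" using H unfolding D0_def by auto
  have s0: "sum (Fterm H) (H \<inter> D0) = sum (Fterm E) (E \<inter> D0)"
    unfolding HD0 by (rule sum.cong) (auto simp: Fterm_def D0_def dd(3))
  have ApH: "{y. (p,y) \<in> H \<and> y \<notin> {p,q}} = Ap" "{y. (q,y) \<in> H \<and> y \<notin> {p,q}} = Aq"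
    using H unfolding Ap_def Aq_def by auto
  have nH: "(p,q) \<notin> H" using H by auto
  have finAp: "finite Ap" unfolding Ap_def by (rule finite_subset[OF _ fin_nb[OF fin, of p]]) auto
  have finAq: "finite Aq" unfolding Aq_def by (rule finite_subset[OF _ fin_nb[OF fin, of q]]) auto
  have bp: "sum (\<lambda>y. Fterm H (p,y) - Fterm E (p,y)) Ap \<ge>
      (2*a-1) * int (card {y\<in>Ap. a \<le> int (deg E y)}) - (2*a-1) * int (card {y\<in>Ap. \<not> a \<le> int (deg E y)})"
  proof (rule sum_pm_bound[OF finAp])
    fix y assume y: "y \<in> Ap"
    then have "deg H y = deg E y" using dd(3) unfolding Ap_def by auto
    then have "Fterm H (p,y) - Fterm E (p,y) = \<bar>(a-1)^2 - (int (deg E y))^2\<bar> - \<bar>a^2 - (int (deg E y))^2\<bar>"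
      unfolding Fterm_def using dHp a_def by simp
    then show "Fterm H (p,y) - Fterm E (p,y) \<ge> (if a \<le> int (deg E y) then 2*a-1 else -(2*a-1))"
      using del_term[OF a1, of "int (deg E y)"] by simp
  qed
  have bq: "sum (\<lambda>y. Fterm H (q,y) - Fterm E (q,y)) Aq \<ge>
      (2*b-1) * int (card {y\<in>Aq. b \<le> int (deg E y)}) - (2*b-1) * int (card {y\<in>Aq. \<not> b \<le> int (deg E y)})"
  proof (rule sum_pm_bound[OF finAq])
    fix y assume y: "y \<in> Aq"
    then have "deg H y = deg E y" using dd(3) unfolding Aq_def by auto
    then have "Fterm H (q,y) - Fterm E (q,y) = \<bar>(b-1)^2 - (int (deg E y))^2\<bar> - \<bar>b^2 - (int (deg E y))^2\<bar>"
      unfolding Fterm_def using dHq b_def by simp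
    then show "Fterm H (q,y) - Fterm E (q,y) \<ge> (if b \<le> int (deg E y) then 2*b-1 else -(2*b-1))"
      using del_term[OF b1, of "int (deg E y)"] by simp
  qed
  have FEpq: "Fterm E (p,q) = \<bar>a^2 - b^2\<bar>" unfolding Fterm_def a_def b_def by simp
  show ?thesis using TH TE s0 ApH nH pq bp bq FEpq
    by (simp add: sum_subtractf algebra_simps)
qed


lemma add_bound:
  assumes fin: "finite E" and symA: "\<forall>x y. (x,y) \<in> E \<longrightarrow> (y,x) \<in> E"
    and irr: "\<And>x. (x,x) \<notin> E" and pq: "(p,q) \<notin> E" and pq': "p \<noteq> q" and H: "H = E \<union> {(p,q),(q,p)}"
  defines "a \<equiv> int (deg E p)" and "b \<equiv> int (deg E q)"
    and "Ap \<equiv> {y. (p,y) \<in> E \<and> y \<notin> {p,q}}" and "Aq \<equiv> {y. (q,y) \<in> E \<and> y \<notin> {p,q}}"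
  shows "sum (Fterm H) H - sum (Fterm E) E \<ge>
     2*((2*a+1)*(int (card {y\<in>Ap. int (deg E y) \<le> a}) - int (card {y\<in>Ap. \<not> int (deg E y) \<le> a}))
      + (2*b+1)*(int (card {y\<in>Aq. int (deg E y) \<le> b}) - int (card {y\<in>Aq. \<not> int (deg E y) \<le> b})))
     + 2*\<bar>(a+1)^2 - (b+1)^2\<bar>"
proof -
  have sym: "\<And>x y. (x,y) \<in> E \<Longrightarrow> (y,x) \<in> E" using symA by blast
  have finH: "finite H" using fin H by auto
  have symH: "\<And>x y. (x,y) \<in> H \<Longrightarrow> (y,x) \<in> H" using sym H by auto
  have irrH: "\<And>x. (x,x) \<notin> H" using irr H pq' by auto
  note dd = deg_add[OF fin sym pq pq' H]
  have a0: "a \<ge> 0" "b \<ge> 0" unfolding a_def b_def by auto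
  have dHp: "int (deg H p) = a + 1" using dd(1) unfolding a_def by simp
  have dHq: "int (deg H q) = b + 1" using dd(2) unfolding b_def by simp
  define D0 where "D0 = {e. fst e \<notin> {p,q} \<and> snd e \<notin> {p,q}}"
  have TH: "sum (Fterm H) H = sum (Fterm H) (H \<inter> D0)
     + 2 * (sum (\<lambda>y. Fterm H (p,y)) {y. (p,y) \<in> H \<and> y \<notin> {p,q}} + sum (\<lambda>y. Fterm H (q,y)) {y. (q,y) \<in> H \<and> y \<notin> {p,q}})
     + (if (p,q) \<in> H then 2 * Fterm H (p,q) else 0)"
    unfolding D0_def by (rule T_split[where f="Fterm H", OF finH symH irrH pq' Fsym[of H]])
  have TE: "sum (Fterm E) E = sum (Fterm E) (E \<inter> D0)
     + 2 * (sum (\<lambda>y. Fterm E (p,y)) Ap + sum (\<lambda>y. Fterm E (q,y)) Aq)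
     + (if (p,q) \<in> E then 2 * Fterm E (p,q) else 0)"
    unfolding D0_def Ap_def Aq_def by (rule T_split[where f="Fterm E", OF fin sym irr pq' Fsym[of E]])
  have HD0: "H \<inter> D0 = E \<inter> D0" using H unfolding D0_def by auto
  have s0: "sum (Fterm H) (H \<inter> D0) = sum (Fterm E) (E \<inter> D0)"
    unfolding HD0 by (rule sum.cong) (auto simp: Fterm_def D0_def dd(3))
  have ApH: "{y. (p,y) \<in> H \<and> y \<notin> {p,q}} = Ap" "{y. (q,y) \<in> H \<and> y \<notin> {p,q}} = Aq"
    using H unfolding Ap_def Aq_def by auto
  have nH: "(p,q) \<in> H" using H by auto
  have finAp: "finite Ap" unfolding Ap_def by (rule finite_subset[OF _ fin_nb[OF fin, of p]]) auto
  have finAq: "finite Aq" unfolding Aq_def by (rule finite_subset[OF _ fin_nb[OF fin, of q]]) auto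
  have bp: "sum (\<lambda>y. Fterm H (p,y) - Fterm E (p,y)) Ap \<ge>
      (2*a+1) * int (card {y\<in>Ap. int (deg E y) \<le> a}) - (2*a+1) * int (card {y\<in>Ap. \<not> int (deg E y) \<le> a})"
  proof (rule sum_pm_bound[OF finAp])
    fix y assume y: "y \<in> Ap"
    then have "deg H y = deg E y" using dd(3) unfolding Ap_def by auto
    then have "Fterm H (p,y) - Fterm E (p,y) = \<bar>(a+1)^2 - (int (deg E y))^2\<bar> - \<bar>a^2 - (int (deg E y))^2\<bar>"
      unfolding Fterm_def using dHp a_def by simp
    then show "Fterm H (p,y) - Fterm E (p,y) \<ge> (if int (deg E y) \<le> a then 2*a+1 else -(2*a+1))"
      using add_term[OF a0(1), of "int (deg E y)"] by simp
  qed
  have bq: "sum (\<lambda>y. Fterm H (q,y) - Fterm E (q,y)) Aq \<ge>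
      (2*b+1) * int (card {y\<in>Aq. int (deg E y) \<le> b}) - (2*b+1) * int (card {y\<in>Aq. \<not> int (deg E y) \<le> b})"
  proof (rule sum_pm_bound[OF finAq])
    fix y assume y: "y \<in> Aq"
    then have "deg H y = deg E y" using dd(3) unfolding Aq_def by auto
    then have "Fterm H (q,y) - Fterm E (q,y) = \<bar>(b+1)^2 - (int (deg E y))^2\<bar> - \<bar>b^2 - (int (deg E y))^2\<bar>"
      unfolding Fterm_def using dHq b_def by simp
    then show "Fterm H (q,y) - Fterm E (q,y) \<ge> (if int (deg E y) \<le> b then 2*b+1 else -(2*b+1))"
      using add_term[OF a0(2), of "int (deg E y)"] by simp
  qed
  have FHpq: "Fterm H (p,q) = \<bar>(a+1)^2 - (b+1)^2\<bar>" unfolding Fterm_def using dHp dHq by simp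
  show ?thesis using TH TE s0 ApH nH pq bp bq FHpq
    by (simp add: sum_subtractf algebra_simps)
qed


lemma arith_lt:
  fixes a b Pu Su Qv Rv Sv l :: int
  assumes "Pu + Su = a - 1" "Qv + Rv = b - 1" "Pu \<ge> l" "Su \<ge> l + 1" "Rv + 1 \<le> Sv" "Sv < l"
    "a < b" "l \<ge> 1" "Rv \<ge> 0"
  shows "(2*a-1)*(Pu-Su) + (2*b-1)*(Qv-Rv) - \<bar>a^2 - b^2\<bar> \<ge> 1"
proof -
  have a2: "a \<ge> 2*l+2" using assms by linarith
  have h1: "(2*a-1)*(Pu-Su) \<ge> (2*a-1)*(2*l-a+1)"
    by (rule mult_left_mono) (use assms a2 in linarith)+
  have h2: "(2*b-1)*(Qv-Rv) \<ge> (2*b-1)*(b+3-2*l)"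
    by (rule mult_left_mono) (use assms a2 in linarith)+
  have ab: "a^2 \<le> b^2" using assms a2 power_mono[of a b 2] by linarith
  then have h3: "\<bar>a^2 - b^2\<bar> = b^2 - a^2" by simp
  have id: "(2*a-1)*(2*l-a+1) + (2*b-1)*(b+3-2*l) - (b^2 - a^2) = (b-a)*(a+b-4*l) + 3*a+5*b-4"
    by (simp add: power2_eq_square algebra_simps)
  have "(b-a)*(a+b-4*l) \<ge> 0" using assms a2 by (intro mult_nonneg_nonneg) linarith+
  then show ?thesis using h1 h2 h3 id a2 assms by linarith
qed

lemma indeg_alt: "(\<And>x y. (x,y) \<in> E \<Longrightarrow> (y,x) \<in> E) \<Longrightarrow> indegF E x = card {w. (x,w) \<in> E \<and> deg E x < deg E w}"
  unfolding indegF_def arcs_def by (rule arg_cong[where f=card]) blast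

lemma outdeg_alt: "outdegF E x = card {w. (x,w) \<in> E \<and> deg E w < deg E x}"
  unfolding outdegF_def arcs_def by simp


lemma lin1: "2*(x+y) + 2*z \<le> (Z::int) \<Longrightarrow> 0 \<le> x \<Longrightarrow> 0 \<le> y \<Longrightarrow> 1 \<le> z \<Longrightarrow> 2 \<le> Z"
  by presburger

lemma lin2:
  fixes a b X Y Z :: int
  assumes "2*((2*a-1)*X + (2*b-1)*Y) - 2*\<bar>a^2-b^2\<bar> \<le> Z" "a = b" "1 \<le> 2*a-1" "X+Y \<ge> 2"
  shows "2 \<le> Z"
proof -
  define M where "M = (2*a-1)*(X+Y)"
  have e1: "(2*a-1)*X + (2*b-1)*Y = M" using assms(2) unfolding M_def by (simp add: algebra_simps)
  have e2: "\<bar>a^2-b^2\<bar> = 0" using assms(2) by simp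
  have m: "1*(X+Y) \<le> M" unfolding M_def by (rule mult_right_mono) (use assms in linarith)+
  have "2*M - 2*0 \<le> Z" using assms(1) unfolding e1 e2 .
  then show ?thesis using m assms(4) by simp
qed

lemma lin3:
  fixes K z Z :: int
  assumes "2*K - 2*z \<le> Z" "K - z \<ge> 1"
  shows "2 \<le> Z"
  using assms by presburger

lemma cM2_gt:
  assumes "sum (Fterm H) H - sum (Fterm E) E \<ge> 2"
  shows "cM2 H > cM2 E"
  unfolding cM2_T using assms by linarith

theorem claim3:
  fixes V :: "'a set" and E :: "('a \<times> 'a) set" and u v :: 'a
  assumes G: "simple_graph V E"
    and maximal: "\<And>H. simple_graph V H \<Longrightarrow> cM2 H \<le> cM2 E"
    and vY: "v \<in> Yset V E"
    and Nv: "in_nbrF E v \<subseteq> Xset V E"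
    and uX: "u \<in> Xset V E"
    and uv: "(u,v) \<in> E"
  shows "(u,v) \<in> arcs E"
proof (rule ccontr)
  assume na: "(u,v) \<notin> arcs E"
  have finV: "finite V" and EV: "E \<subseteq> V \<times> V" and sym: "\<And>x y. (x,y) \<in> E \<Longrightarrow> (y,x) \<in> E"
    and irr: "\<And>x. (x,x) \<notin> E" using G unfolding simple_graph_def by auto
  have fin: "finite E" using finV EV finite_subset by blast
  have symA: "\<forall>x y. (x,y) \<in> E \<longrightarrow> (y,x) \<in> E" using sym by blast
  define d where "d = deg E"
  have duv: "d u \<le> d v" using na uv unfolding arcs_def d_def by auto
  define W where "W = in_nbrF E v"
  have Wdef: "W = {w. (w,v) \<in> E \<and> d v < d w}" unfolding W_def in_nbrF_def arcs_def d_def by simp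
  have finW: "finite W" unfolding Wdef
    by (rule finite_subset[OF _ fin_nb[OF fin, of v]]) (auto intro: sym)
  define l where "l = card W"
  define Sv where "Sv = card {w. (v,w) \<in> E \<and> d w < d v}"
  have Svl: "Sv < l" using vY unfolding Yset_def outdeg_alt W_def l_def Sv_def d_def indegF_def in_nbrF_def
    by simp
  have uvne: "u \<noteq> v" using uv irr by auto
  have outin: "\<And>x. x \<in> Xset V E \<Longrightarrow>
     card {w. (x,w) \<in> E \<and> d x < d w} \<le> card {w. (x,w) \<in> E \<and> d w < d x}"
    unfolding Xset_def using indeg_alt[of E, OF sym] outdeg_alt[of E] d_def by auto
  show False
  proof (cases "\<exists>w\<in>W. (u,w) \<notin> E")
    case True
    then obtain w where wW: "w \<in> W" and uw: "(u,w) \<notin> E" by blast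
    have wv: "(w,v) \<in> E" and dw: "d v < d w" using wW unfolding Wdef by auto
    have uwne: "u \<noteq> w" using dw duv by auto
    have wu: "(w,u) \<notin> E" using uw sym by blast
    have wX: "w \<in> Xset V E" using wW Nv W_def by auto
    have wV: "w \<in> V" "u \<in> V" using wv uv EV by auto
    define H where "H = E \<union> {(u,w),(w,u)}"
    have sgH: "simple_graph V H" unfolding simple_graph_def H_def
      using finV EV wV sym irr uwne by auto
    define a where "a = int (deg E u)"
    define c where "c = int (deg E w)"
    define Ap where "Ap = {y. (u,y) \<in> E \<and> y \<notin> {u,w}}"
    define Aq where "Aq = {y. (w,y) \<in> E \<and> y \<notin> {u,w}}"
    note bound = add_bound[where E=E and p=u and q=w and H=H, OF fin symA irr uw uwne H_def]
    have finAp: "finite Ap" unfolding Ap_def by (rule finite_subset[OF _ fin_nb[OF fin, of u]]) auto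
    have finAq: "finite Aq" unfolding Aq_def by (rule finite_subset[OF _ fin_nb[OF fin, of w]]) auto
    have cp: "card {y\<in>Ap. \<not> int (deg E y) \<le> a} \<le> card {y\<in>Ap. int (deg E y) \<le> a}"
    proof -
      have "card {y\<in>Ap. \<not> int (deg E y) \<le> a} \<le> card {y. (u,y) \<in> E \<and> d u < d y}"
        by (rule card_mono[OF fin_nb[OF fin, of u, THEN finite_subset[rotated]]]) (auto simp: Ap_def a_def d_def)
      also have "\<dots> \<le> card {y. (u,y) \<in> E \<and> d y < d u}" by (rule outin[OF uX])
      also have "\<dots> \<le> card {y\<in>Ap. int (deg E y) \<le> a}"
        by (rule card_mono[OF finite_subset[OF _ finAp]]) (auto simp: Ap_def a_def d_def uw irr)
      finally show ?thesis .
    qed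
    have cq: "card {y\<in>Aq. \<not> int (deg E y) \<le> c} \<le> card {y\<in>Aq. int (deg E y) \<le> c}"
    proof -
      have "card {y\<in>Aq. \<not> int (deg E y) \<le> c} \<le> card {y. (w,y) \<in> E \<and> d w < d y}"
        by (rule card_mono[OF fin_nb[OF fin, of w, THEN finite_subset[rotated]]]) (auto simp: Aq_def c_def d_def)
      also have "\<dots> \<le> card {y. (w,y) \<in> E \<and> d y < d w}" by (rule outin[OF wX])
      also have "\<dots> \<le> card {y\<in>Aq. int (deg E y) \<le> c}"
        by (rule card_mono[OF finite_subset[OF _ finAq]]) (use irr wu in \<open>auto simp: Aq_def c_def d_def\<close>)
      finally show ?thesis .
    qed
    have t1: "(2*a+1)*(int (card {y\<in>Ap. int (deg E y) \<le> a}) - int (card {y\<in>Ap. \<not> int (deg E y) \<le> a})) \<ge> 0"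
      using cp unfolding a_def by (intro mult_nonneg_nonneg) auto
    have t2: "(2*c+1)*(int (card {y\<in>Aq. int (deg E y) \<le> c}) - int (card {y\<in>Aq. \<not> int (deg E y) \<le> c})) \<ge> 0"
      using cq unfolding c_def by (intro mult_nonneg_nonneg) auto
    have ac: "a < c" using dw duv unfolding a_def c_def d_def by simp
    have "(a+1)^2 < (c+1)^2" using ac power_strict_mono[of "a+1" "c+1" 2] a_def by simp
    then have t3: "\<bar>(a+1)^2 - (c+1)^2\<bar> \<ge> 1" by simp
    have "sum (Fterm H) H - sum (Fterm E) E \<ge> 2"
      by (rule lin1[OF bound[folded a_def c_def Ap_def Aq_def] t1 t2 t3])
    then have "cM2 H > cM2 E" by (rule cM2_gt)
    then show False using maximal[OF sgH] by simp
  next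
    case False
    then have Wu: "\<And>w. w \<in> W \<Longrightarrow> (u,w) \<in> E" by blast
    define H where "H = E - {(u,v),(v,u)}"
    have sgH: "simple_graph V H" unfolding simple_graph_def H_def
      using finV EV sym irr by auto
    define a where "a = int (deg E u)"
    define b where "b = int (deg E v)"
    define Ap where "Ap = {y. (u,y) \<in> E \<and> y \<notin> {u,v}}"
    define Aq where "Aq = {y. (v,y) \<in> E \<and> y \<notin> {u,v}}"
    note bound = del_bound[where E=E and p=u and q=v and H=H, OF fin symA irr uv H_def]
    have finAp: "finite Ap" unfolding Ap_def by (rule finite_subset[OF _ fin_nb[OF fin, of u]]) auto
    have finAq: "finite Aq" unfolding Aq_def by (rule finite_subset[OF _ fin_nb[OF fin, of v]]) auto
    define Pu where "Pu = card {y\<in>Ap. a \<le> int (deg E y)}"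
    define Su where "Su = card {y\<in>Ap. \<not> a \<le> int (deg E y)}"
    define Qv where "Qv = card {y\<in>Aq. b \<le> int (deg E y)}"
    define Rv where "Rv = card {y\<in>Aq. \<not> b \<le> int (deg E y)}"
    have cApe: "Ap = {y. (u,y) \<in> E} - {v}" unfolding Ap_def using irr by auto
    have cAqe: "Aq = {y. (v,y) \<in> E} - {u}" unfolding Aq_def using irr by auto
    have cAp: "card Ap = deg E u - 1" unfolding cApe deg_def using uv fin_nb[OF fin] by simp
    have cAq: "card Aq = deg E v - 1" unfolding cAqe deg_def using sym[OF uv] fin_nb[OF fin] by simp
    have du1: "deg E u \<ge> 1" using deg_pos[OF fin uv] .
    have dv1: "deg E v \<ge> 1" using deg_pos[OF fin sym[OF uv]] .
    have PS: "int Pu + int Su = a - 1" using card_part[OF finAp, of "\<lambda>y. a \<le> int (deg E y)"] cAp du1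
      unfolding Pu_def Su_def a_def by linarith
    have QR: "int Qv + int Rv = b - 1" using card_part[OF finAq, of "\<lambda>y. b \<le> int (deg E y)"] cAq dv1
      unfolding Qv_def Rv_def b_def by linarith
    have WAp: "W \<subseteq> {y\<in>Ap. a \<le> int (deg E y)}"
      using Wu duv unfolding Wdef Ap_def a_def d_def by force
    have Pul: "l \<le> Pu" unfolding l_def Pu_def by (rule card_mono[OF finite_subset[OF _ finAp] WAp]) auto
    have RvSv: "Rv \<le> Sv" unfolding Rv_def Sv_def
      by (rule card_mono[OF fin_nb[OF fin, of v, THEN finite_subset[rotated]]]) (auto simp: Aq_def b_def d_def)
    have ab: "a \<le> b" using duv unfolding a_def b_def d_def by simp
    have "sum (Fterm H) H - sum (Fterm E) E \<ge> 2"
    proof (cases "a = b")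
      case True
      have X: "int Pu - int Su + (int Qv - int Rv) \<ge> 2" using PS QR True Pul RvSv Svl by linarith
      have a1: "1 \<le> 2*a - 1" using du1 a_def by simp
      show ?thesis
        by (rule lin2[OF bound[folded a_def b_def Ap_def Aq_def, folded Pu_def Su_def Qv_def Rv_def] True a1]) (use X in linarith)
    next
      case False
      then have altb: "a < b" using ab by simp
      have vnW: "v \<notin> W" unfolding Wdef by simp
      have "card (insert v W) \<le> card {w. (u,w) \<in> E \<and> d u < d w}"
        by (rule card_mono[OF fin_nb[OF fin, of u, THEN finite_subset[rotated]]])
           (use Wu altb uv in \<open>auto simp: Wdef a_def b_def d_def\<close>)
      also have "\<dots> \<le> card {w. (u,w) \<in> E \<and> d w < d u}" by (rule outin[OF uX])
      also have "\<dots> \<le> Su" unfolding Su_def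
        by (rule card_mono[OF finite_subset[OF _ finAp]]) (use ab irr in \<open>auto simp: Ap_def a_def b_def d_def\<close>)
      finally have Sul: "l + 1 \<le> Su" using vnW finW l_def by simp
      have unA: "u \<notin> Aq" unfolding Aq_def by simp
      have "card (insert u {y\<in>Aq. \<not> b \<le> int (deg E y)}) \<le> Sv" unfolding Sv_def
        by (rule card_mono[OF fin_nb[OF fin, of v, THEN finite_subset[rotated]]])
          (use altb sym[OF uv] in \<open>auto simp: Aq_def a_def b_def d_def\<close>)
      then have RS: "Rv + 1 \<le> Sv" unfolding Rv_def using unA finAq by simp
      have l1: "l \<ge> 1" using Svl by simp
      have "(2*a-1)*(int Pu - int Su) + (2*b-1)*(int Qv - int Rv) - \<bar>a^2 - b^2\<bar> \<ge> 1"
        by (rule arith_lt[where l="int l" and Sv="int Sv"]) (use PS QR Pul Sul RS Svl altb l1 in linarith)+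
      then show ?thesis
        by (rule lin3[OF bound[folded a_def b_def Ap_def Aq_def, folded Pu_def Su_def Qv_def Rv_def]])
    qed
    then have "cM2 H > cM2 E" by (rule cM2_gt)
    then show False using maximal[OF sgH] by simp
  qed
qed

end
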